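(* For $s\in\mathbb{D}^+_{21/4}$ let $r_1(s),r_2(s),r_3(s)$ be the roots of $P_s(u)=u^3/3+u^2+s$ labeled as described in the context. Then: (i) For all $s\in\mathbb{D}^+_{21/4}$ we have $r_3(s),r_1(s)\in\mathbb{D}^-_5$ and $r_2(s)\in\mathbb{D}^+_5$. (ii) Let $\hat{\mathcal{C}}_0$ be the polygon with vertices $-1,\,-1-6i,\,6-6i,\,6+6i,\,-6+6i,\,-6,\,-1$, oriented anticlockwise. Then for $s\in\mathbb{D}^+_{21/4}$, $r_2(s),r_3(s)$ lie in the interior of $\hat{\mathcal{C}}_0$ while $r_1(s)$ lies in its exterior. (iii) For all $s\in\mathbb{D}^+_{21/4}$ the closed path $\mathcal{C}$ (defined in the context) encloses $r_1(s)$ and $r_3(s)$ and leaves $r_2(s)$ outside. Moreover $$\alpha:=\sup_{u\in\mathcal{C},\ s\in\mathbb{D}^+_{21/4}}|J(u,s)|<\infty,\qquad J(u,s)=\int_{u_0}^u R(v,s)\,dv,$$ where the integral is taken along $\mathcal{C}$.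
   Context: $\mathbb{H}$ is the open upper half plane; $\mathbb{D}^+_\rho=\{s\in\mathbb{H}:|s|<\rho\}$ and $\mathbb{D}^-_\rho=\{s\in-\mathbb{H}:|s|<\rho\}$. For $s\in\mathbb{H}$ the polynomial $P_s$ has distinct roots, exactly one of which, $r_2(s)$, lies in $\mathbb{H}$; the other two lie in the lower half plane, $r_1(s)$ having real part $<-2$ and $r_3(s)$ having positive real part. The path $\mathcal{C}$ consists of the polygonal line connecting successively $6,\ \frac{1+i}{3},\ -(1+i),\ -2+\frac{-1+i}{3},\ -3+\frac{i}{3},\ u_0,\ -6$, with $u_0=-4$, closed by the semicircle of radius $6$ centered at the origin in the lower half plane. $R(v,s)=\sqrt{v^3/3+v^2+s}$, taken as a continuous branch along $\mathcal{C}$ starting at $u_0$. *)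

theory Defs
  imports "HOL-Complex_Analysis.Complex_Analysis"
begin

definition Pcub :: "complex \<Rightarrow> complex \<Rightarrow> complex" where
  "Pcub s u = u ^ 3 / 3 + u ^ 2 + s"

definition Dplus :: "real \<Rightarrow> complex set" where
  "Dplus \<rho> = {s. Im s > 0 \<and> cmod s < \<rho>}"

definition Dminus :: "real \<Rightarrow> complex set" where
  "Dminus \<rho> = {s. Im s < 0 \<and> cmod s < \<rho>}"

definition r1 :: "complex \<Rightarrow> complex" where
  "r1 s = (THE u. Pcub s u = 0 \<and> Im u < 0 \<and> Re u < -2)"

definition r2 :: "complex \<Rightarrow> complex" where
  "r2 s = (THE u. Pcub s u = 0 \<and> Im u > 0)"

definition r3 :: "complex \<Rightarrow> complex" where
  "r3 s = (THE u. Pcub s u = 0 \<and> Im u < 0 \<and> Re u > 0)"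

definition C0hat :: "real \<Rightarrow> complex" where
  "C0hat = linepath (-1) (-1 - 6*\<i>) +++ linepath (-1 - 6*\<i>) (6 - 6*\<i>) +++
           linepath (6 - 6*\<i>) (6 + 6*\<i>) +++ linepath (6 + 6*\<i>) (-6 + 6*\<i>) +++
           linepath (-6 + 6*\<i>) (-6) +++ linepath (-6) (-1)"

definition u0 :: complex where "u0 = -4"

definition Cpath :: "real \<Rightarrow> complex" where
  "Cpath = linepath u0 (-6) +++ part_circlepath 0 6 pi (2*pi) +++
           linepath 6 ((1 + \<i>)/3) +++ linepath ((1 + \<i>)/3) (-(1 + \<i>)) +++
           linepath (-(1 + \<i>)) (-2 + (-1 + \<i>)/3) +++
           linepath (-2 + (-1 + \<i>)/3) (-3 + \<i>/3) +++
           linepath (-3 + \<i>/3) u0"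

text \<open>A continuous branch of R(v,s) = sqrt(v^3/3+v^2+s) along C (as a function of the
  path parameter).\<close>
definition is_branch :: "complex \<Rightarrow> (real \<Rightarrow> complex) \<Rightarrow> bool" where
  "is_branch s \<rho> \<longleftrightarrow> continuous_on {0..1} \<rho> \<and>
     (\<forall>t\<in>{0..1}. (\<rho> t)^2 = Pcub s (Cpath t))"

text \<open>J(u,s) = integral of R(v,s) dv along C from u0 to u = Cpath t.\<close>
definition Jint :: "(real \<Rightarrow> complex) \<Rightarrow> real \<Rightarrow> complex" where
  "Jint \<rho> t = integral {0..t} (\<lambda>\<tau>. \<rho> \<tau> * vector_derivative Cpath (at \<tau> within {0..1}))"

end

theory Submission
  imports Defs
begin

lemma two_roots:
  fixes P Q :: complex
  assumes "P^3/3 - P = Q^3/3 - Q" "P \<noteq> Q"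
  shows "P^2 + P*Q + Q^2 = 3"
proof -
  have "(P - Q) * (P^2 + P*Q + Q^2 - 3) = 0"
    using assms(1) by (simp add: field_simps power3_eq_cube power2_eq_square) algebra
  then show ?thesis using assms(2) by simp
qed

lemma real_ineq1:
  fixes a b X Y :: real
  assumes "X^2 - Y^2 = 12 - 3*(a^2 - b^2)" "X*Y = -3*a*b" "b > 0" "a^2 < 1 + b^2/3"
  shows "Y^2 < b^2"
proof (rule ccontr)
  assume "\<not> Y^2 < b^2"
  hence T: "Y^2 \<ge> b^2" by simp
  define k where "k = 12 - 3*a^2 + 3*b^2"
  have k: "k > 0" using assms(4) zero_le_power2[of b] unfolding k_def by linarith
  have "X^2 = k + Y^2" using assms(1) unfolding k_def by simp
  hence "(X*Y)^2 = (k + Y^2) * Y^2" by (simp add: power_mult_distrib)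
  also have "\<dots> \<ge> (k + b^2) * b^2" using T k by (intro mult_mono) auto
  finally have A: "(k + b^2) * b^2 \<le> 9*a^2*b^2" using assms(2) by (simp add: power_mult_distrib)
  have "9*a^2 < k + b^2" using assms(4) unfolding k_def by simp
  hence "9*a^2*b^2 < (k+b^2)*b^2" using assms(3) by (intro mult_strict_right_mono) auto
  with A show False by simp
qed

lemma upper_other:
  fixes P Q :: complex
  assumes "P^2 + P*Q + Q^2 = 3" "Im P > 0" "(Re P)^2 < 1 + (Im P)^2/3"
  shows "Im Q < 0"
proof -
  define w where "w = 2*Q + P"
  have "w^2 = 4*(P^2 + P*Q + Q^2) - 3*P^2" unfolding w_def
    by (simp add: power2_eq_square algebra_simps)
  hence "w^2 = 12 - 3*P^2" using assms(1) by simp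
  hence "Re (w^2) = Re (12 - 3*P^2)" "Im (w^2) = Im (12 - 3*P^2)" by auto
  hence e: "(Re w)^2 - (Im w)^2 = 12 - 3*((Re P)^2 - (Im P)^2)" "Re w * Im w = -3 * Re P * Im P"
    by (simp_all add: power2_eq_square algebra_simps)
  have "(Im w)^2 < (Im P)^2" by (rule real_ineq1[OF e assms(2,3)])
  hence "Im w < Im P" using power_less_imp_less_base[of "Im w" 2 "Im P"] assms(2) by simp
  thus ?thesis unfolding w_def by simp
qed

lemma lower_same_side:
  fixes P Q :: complex
  assumes "P^2 + P*Q + Q^2 = 3" "Im P < 0" "Im Q < 0"
    "(Re P)^2 > 1 + (Im P)^2/3" "(Re Q)^2 > 1 + (Im Q)^2/3" "Re P * Re Q > 0"
    "(Re (P+Q))^2 < 1 + (Im (P+Q))^2/3"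
  shows False
proof -
  define a1 a2 b1 b2 where "a1 = Re P" "a2 = Re Q" "b1 = Im P" "b2 = Im Q"
  have "b1*b2 > 0" using assms(2,3) unfolding a1_a2_b1_b2_def by (simp add: mult_neg_neg)
  hence pos: "1 + b1*b2/3 > 0" by simp
  have "(a1*a2)^2 > (1 + b1^2/3)*(1+b2^2/3)" using assms(4,5) unfolding a1_a2_b1_b2_def
    by (simp add: power_mult_distrib mult_strict_mono' )
  moreover have "(1 + b1^2/3)*(1+b2^2/3) \<ge> (1 + b1*b2/3)^2"
  proof -
    have "(1 + b1^2/3)*(1+b2^2/3) - (1 + b1*b2/3)^2 = (b1-b2)^2/3"
      by (simp add: power2_eq_square field_simps)
    thus ?thesis using zero_le_power2[of "b1-b2"] by linarith
  qed
  ultimately have "(a1*a2)^2 > (1 + b1*b2/3)^2" by simp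
  moreover have "a1*a2 > 0" using assms(6) unfolding a1_a2_b1_b2_def by simp
  ultimately have "a1*a2 > 1 + b1*b2/3"
    using power_less_imp_less_base[of "1 + b1*b2/3" 2 "a1*a2"] by simp
  hence "(a1+a2)^2 > 4 + (b1+b2)^2/3" using assms(4,5) unfolding a1_a2_b1_b2_def
    by (simp add: power2_eq_square field_simps)
  thus False using assms(7) unfolding a1_a2_b1_b2_def by simp
qed

lemma shiftP: "Pcub s u = ((u+1)^3/3 - (u+1)) + 2/3 + s"
  unfolding Pcub_def by (simp add: power3_eq_cube power2_eq_square field_simps)

lemma Im_P: "Im (Pcub s u) = Im u * ((Re u)^2 - (Im u)^2/3 + 2*Re u) + Im s"
  unfolding Pcub_def by (simp add: power3_eq_cube power2_eq_square field_simps) 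

lemma cardano:
  fixes c :: complex
  shows "\<exists>P. P^3/3 - P = c"
proof -
  define t where "t = (3*c + csqrt (9*c^2 - 4))/2"
  have t2: "t^2 - 3*c*t + 1 = 0" unfolding t_def
    by (simp add: power2_eq_square field_simps) (simp add: power2_eq_square[symmetric] algebra_simps)
  have tnz: "t \<noteq> 0" using t2 by auto
  define A where "A = exp (Ln t / 3)"
  have A3: "A^3 = t" unfolding A_def using exp_of_nat_mult[of 3 "Ln t / 3"] tnz by simp
  have Anz: "A \<noteq> 0" unfolding A_def by simp
  have "t + 1/t = 3*c" using t2 tnz by (simp add: field_simps power2_eq_square)
  hence "A^3 + 1/A^3 = 3*c" using A3 by simp
  moreover have "(A + 1/A)^3/3 - (A + 1/A) = (A^3 + 1/A^3)/3" using Anz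
    by (simp add: field_simps power3_eq_cube)
  ultimately show ?thesis by (intro exI[of _ "A + 1/A"]) simp
qed

lemma P_nonreal_sq:
  fixes P :: complex
  assumes "P^2 = of_real r" "r > 0"
  shows "Im P = 0"
proof -
  have "Re (P^2) = r" "Im (P^2) = 0" using assms(1) by auto
  hence "(Re P)^2 - (Im P)^2 = r" "Re P * Im P = 0" by (auto simp: power2_eq_square)
  show ?thesis
  proof (rule ccontr)
    assume "Im P \<noteq> 0"
    hence "Re P = 0" using \<open>Re P * Im P = 0\<close> by simp
    hence "(Im P)^2 = -r" using \<open>(Re P)^2 - (Im P)^2 = r\<close> by simp
    thus False using assms(2) zero_le_power2[of "Im P"] by linarith
  qed
qed

lemma three_roots:
  fixes c :: complex
  assumes "Im c \<noteq> 0"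
  shows "\<exists>P Q R. P^3/3 - P = c \<and> Q^3/3 - Q = c \<and> R^3/3 - R = c \<and> P \<noteq> Q \<and> P \<noteq> R \<and> Q \<noteq> R"
proof -
  obtain P where P: "P^3/3 - P = c" using cardano by blast
  define d where "d = csqrt (12 - 3*P^2)"
  have d2: "d^2 = 12 - 3*P^2" unfolding d_def by simp
  define Q where "Q = (-P + d)/2"
  define R where "R = (-P - d)/2"
  have gen: "X^3/3 - X = c" if "X^2 + P*X + P^2 = 3" for X
  proof -
    have "(X^3/3 - X) - (P^3/3 - P) = (X - P) * (X^2 + P*X + P^2 - 3)/3"
      by (simp add: field_simps power3_eq_cube power2_eq_square)
    also have "\<dots> = 0" using that by simp
    finally show ?thesis using P by simp
  qed
  have "Q^2 + P*Q + P^2 = (3*P^2 + d^2)/4" unfolding Q_def by (simp add: field_simps power2_eq_square)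
  hence Qr: "Q^3/3 - Q = c" using d2 by (intro gen) simp
  have "R^2 + P*R + P^2 = (3*P^2 + d^2)/4" unfolding R_def by (simp add: field_simps power2_eq_square)
  hence Rr: "R^3/3 - R = c" using d2 by (intro gen) simp
  have QR: "Q \<noteq> R"
  proof
    assume "Q = R"
    hence "d = 0" unfolding Q_def R_def by simp
    hence "P^2 = of_real 4" using d2 by simp
    hence "Im P = 0" by (rule P_nonreal_sq) simp
    moreover have "c = P * (P^2/3 - 1)" using P by (simp add: field_simps power3_eq_cube power2_eq_square)
    moreover have "3*c = P" using \<open>P^2 = of_real 4\<close> \<open>c = P * (P^2/3 - 1)\<close> by (simp add: field_simps)
    hence "Im (3*c) = Im P" by (rule arg_cong)
    ultimately show False using assms by simp
  qed
  have ne: "X \<noteq> P" if "X^2 + P*X + P^2 = 3" for X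
  proof
    assume "X = P"
    hence "P^2 = of_real 1" using that by (simp add: power2_eq_square)
    hence "Im P = 0" by (rule P_nonreal_sq) simp
    moreover have "c = P * (P^2/3 - 1)" using P by (simp add: field_simps power3_eq_cube power2_eq_square)
    moreover have "3*c = -2*P" using \<open>P^2 = of_real 1\<close> \<open>c = P * (P^2/3 - 1)\<close> by (simp add: field_simps)
    hence "Im (3*c) = Im (-2*P)" by (rule arg_cong)
    ultimately show False using assms by simp
  qed
  have "Q^2 + P*Q + P^2 = 3" "R^2 + P*R + P^2 = 3"
    using d2 \<open>Q^2 + P*Q + P^2 = (3*P^2 + d^2)/4\<close> \<open>R^2 + P*R + P^2 = (3*P^2 + d^2)/4\<close> by simp_all
  hence "Q \<noteq> P" "R \<noteq> P" using ne by auto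
  thus ?thesis using P Qr Rr QR by blast
qed

lemma root_region:
  assumes "Pcub s u = 0" "Im s > 0"
  shows "Im u * ((Re u + 1)^2 - 1 - (Im u)^2/3) < 0"
proof -
  have "Im u * ((Re u)^2 - (Im u)^2/3 + 2*Re u) + Im s = 0" using assms(1) Im_P[of s u] by simp
  hence h: "Im u * ((Re u)^2 - (Im u)^2/3 + 2*Re u) = - Im s" by linarith
  have "(Re u + 1)^2 - 1 - (Im u)^2/3 = (Re u)^2 - (Im u)^2/3 + 2*Re u"
    by (simp add: power2_eq_square algebra_simps)
  hence "Im u * ((Re u + 1)^2 - 1 - (Im u)^2/3) = - Im s" using h by (simp only:)
  thus ?thesis using assms(2) by linarith
qed

lemma root_up:
  assumes "Pcub s u = 0" "Im s > 0" "Im u > 0"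
  shows "(Re u + 1)^2 < 1 + (Im u)^2/3"
proof -
  have "Im u * ((Re u + 1)^2 - 1 - (Im u)^2/3) < 0" by (rule root_region[OF assms(1,2)])
  hence "(Re u + 1)^2 - 1 - (Im u)^2/3 < 0" using assms(3) by (simp add: mult_less_0_iff)
  thus ?thesis by simp
qed

lemma root_down:
  assumes "Pcub s u = 0" "Im s > 0" "Im u < 0"
  shows "(Re u + 1)^2 > 1 + (Im u)^2/3"
proof -
  have "Im u * ((Re u + 1)^2 - 1 - (Im u)^2/3) < 0" by (rule root_region[OF assms(1,2)])
  hence "(Re u + 1)^2 - 1 - (Im u)^2/3 > 0" using assms(3) by (simp add: mult_less_0_iff)
  thus ?thesis by simp
qed

lemma root_nonreal:
  assumes "Pcub s u = 0" "Im s > 0"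
  shows "Im u \<noteq> 0"
  using root_region[OF assms] by auto

lemma root_down_side:
  assumes "Pcub s u = 0" "Im s > 0" "Im u < 0"
  shows "Re u > 0 \<or> Re u < -2"
proof -
  have "(Re u + 1)^2 > 1" using root_down[OF assms] zero_le_power2[of "Im u"] by linarith
  hence "\<bar>Re u + 1\<bar> > 1" by (metis abs_le_square_iff abs_one not_le one_power2)
  thus ?thesis by linarith
qed

lemma root_shift: "Pcub s u = 0 \<longleftrightarrow> (u+1)^3/3 - (u+1) = -(s + 2/3)"
  unfolding shiftP by (auto simp: algebra_simps)

lemma up_unique:
  assumes "Pcub s u = 0" "Pcub s v = 0" "Im s > 0" "Im u > 0" "Im v > 0"
  shows "u = v"
proof (rule ccontr)
  assume "u \<noteq> v"
  define P Q where "P = u+1" "Q = v+1"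
  have "P^3/3 - P = Q^3/3 - Q" using assms(1,2) unfolding root_shift P_Q_def by simp
  hence e: "P^2 + P*Q + Q^2 = 3" using \<open>u \<noteq> v\<close> unfolding P_Q_def by (intro two_roots) auto
  have "(Re P)^2 < 1 + (Im P)^2/3" using root_up[OF assms(1,3,4)] unfolding P_Q_def by simp
  hence "Im Q < 0" using upper_other[OF e] assms(4) unfolding P_Q_def by simp
  thus False using assms(5) unfolding P_Q_def by simp
qed

lemma down_unique:
  assumes "Pcub s u = 0" "Pcub s v = 0" "Im s > 0" "Im u < 0" "Im v < 0"
    "(Re u > 0 \<and> Re v > 0) \<or> (Re u < -2 \<and> Re v < -2)"
  shows "u = v"
proof (rule ccontr)
  assume "u \<noteq> v"
  define P Q where "P = u+1" "Q = v+1"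
  have gPQ: "P^3/3 - P = Q^3/3 - Q" using assms(1,2) unfolding root_shift P_Q_def by simp
  hence e: "P^2 + P*Q + Q^2 = 3" using \<open>u \<noteq> v\<close> unfolding P_Q_def by (intro two_roots) auto
  define W where "W = -(P+Q)"
  have "W^3/3 - W - (P^3/3 - P) = (3 - (P^2 + P*Q + Q^2)) * (2*P+Q)/3"
    unfolding W_def by (simp add: field_simps power3_eq_cube power2_eq_square)
  hence "W^3/3 - W = P^3/3 - P" using e by simp
  hence rW: "Pcub s (W - 1) = 0" using assms(1) unfolding root_shift P_Q_def by simp
  have "Im (W - 1) > 0" using assms(4,5) unfolding W_def P_Q_def by simp
  hence "(Re (W - 1) + 1)^2 < 1 + (Im (W - 1))^2/3" using root_up[OF rW assms(3)] by simp
  moreover have "(- Re P - Re Q)^2 = (Re P + Re Q)^2" "(- Im P - Im Q)^2 = (Im P+Im Q)^2"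
    by (simp_all add: power2_eq_square algebra_simps)
  ultimately have hW: "(Re (P+Q))^2 < 1 + (Im (P+Q))^2/3" unfolding W_def by simp
  have hP: "(Re P)^2 > 1 + (Im P)^2/3" using root_down[OF assms(1,3,4)] unfolding P_Q_def by simp
  have hQ: "(Re Q)^2 > 1 + (Im Q)^2/3" using root_down[OF assms(2,3,5)] unfolding P_Q_def by simp
  have "Re P * Re Q > 0" using assms(6) unfolding P_Q_def
    by (auto intro: mult_pos_pos mult_neg_neg)
  from lower_same_side[OF e _ _ hP hQ this hW] show False
    using assms(4,5) unfolding P_Q_def by simp
qed

lemma roots_main:
  assumes "Im s > 0"
  shows "(\<exists>!u. Pcub s u = 0 \<and> Im u > 0) \<and> (\<exists>!u. Pcub s u = 0 \<and> Im u < 0 \<and> Re u < -2)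
       \<and> (\<exists>!u. Pcub s u = 0 \<and> Im u < 0 \<and> Re u > 0)"
proof -
  have "Im (-(s + 2/3)) \<noteq> 0" using assms by simp
  then obtain P Q R where PQR: "P^3/3 - P = -(s + 2/3)" "Q^3/3 - Q = -(s + 2/3)" "R^3/3 - R = -(s + 2/3)"
    "P \<noteq> Q" "P \<noteq> R" "Q \<noteq> R" using three_roots by blast
  define x y z where "x = P - 1" "y = Q - 1" "z = R - 1"
  have rt: "Pcub s x = 0" "Pcub s y = 0" "Pcub s z = 0" using PQR(1-3) unfolding root_shift x_y_z_def by simp_all
  have ne: "x \<noteq> y" "x \<noteq> z" "y \<noteq> z" using PQR(4-6) unfolding x_y_z_def by auto
  define A B C where "A = (\<lambda>u. Im u > 0)" "B = (\<lambda>u. Im u < 0 \<and> Re u < -2)" "C = (\<lambda>u. Im u < 0 \<and> Re u > 0)"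
  have cls: "A w \<or> B w \<or> C w" if "Pcub s w = 0" for w
  proof -
    have "Im w \<noteq> 0" by (rule root_nonreal[OF that assms])
    thus ?thesis using root_down_side[OF that assms] unfolding A_B_C_def by linarith
  qed
  have uA: "w = w'" if "Pcub s w = 0" "Pcub s w' = 0" "A w" "A w'" for w w'
    using up_unique[OF that(1,2) assms] that(3,4) unfolding A_B_C_def by simp
  have uB: "w = w'" if "Pcub s w = 0" "Pcub s w' = 0" "B w" "B w'" for w w'
    using down_unique[OF that(1,2) assms] that(3,4) unfolding A_B_C_def by simp
  have uC: "w = w'" if "Pcub s w = 0" "Pcub s w' = 0" "C w" "C w'" for w w'
    using down_unique[OF that(1,2) assms] that(3,4) unfolding A_B_C_def by simp
  have disj: "\<not> (A w \<and> B w)" "\<not> (A w \<and> C w)" "\<not> (B w \<and> C w)" for w unfolding A_B_C_def by auto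
  have nxy: "\<not> (A x \<and> A y)" "\<not> (B x \<and> B y)" "\<not> (C x \<and> C y)"
    using uA[OF rt(1,2)] uB[OF rt(1,2)] uC[OF rt(1,2)] ne by auto
  have nxz: "\<not> (A x \<and> A z)" "\<not> (B x \<and> B z)" "\<not> (C x \<and> C z)"
    using uA[OF rt(1,3)] uB[OF rt(1,3)] uC[OF rt(1,3)] ne by auto
  have nyz: "\<not> (A y \<and> A z)" "\<not> (B y \<and> B z)" "\<not> (C y \<and> C z)"
    using uA[OF rt(2,3)] uB[OF rt(2,3)] uC[OF rt(2,3)] ne by auto
  have "(A x \<or> A y \<or> A z) \<and> (B x \<or> B y \<or> B z) \<and> (C x \<or> C y \<or> C z)"
    using cls[OF rt(1)] cls[OF rt(2)] cls[OF rt(3)] nxy nxz nyz disj by blast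
  hence ex: "(\<exists>w. Pcub s w = 0 \<and> A w) \<and> (\<exists>w. Pcub s w = 0 \<and> B w) \<and> (\<exists>w. Pcub s w = 0 \<and> C w)"
    using rt by blast
  obtain wa where wa: "Pcub s wa = 0" "A wa" using ex by blast
  obtain wb where wb: "Pcub s wb = 0" "B wb" using ex by blast
  obtain wc where wc: "Pcub s wc = 0" "C wc" using ex by blast
  have "\<exists>!u. Pcub s u = 0 \<and> 0 < Im u"
  proof (rule ex1I[of _ wa])
    show "Pcub s wa = 0 \<and> 0 < Im wa" using wa unfolding A_B_C_def by simp
    fix y assume y: "Pcub s y = 0 \<and> 0 < Im y"
    hence "A y" unfolding A_B_C_def by simp
    thus "y = wa" using uA[of y wa] wa y by simp
  qed
  moreover have "\<exists>!u. Pcub s u = 0 \<and> Im u < 0 \<and> Re u < -2"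
  proof (rule ex1I[of _ wb])
    show "Pcub s wb = 0 \<and> Im wb < 0 \<and> Re wb < -2" using wb unfolding A_B_C_def by simp
    fix y assume y: "Pcub s y = 0 \<and> Im y < 0 \<and> Re y < -2"
    hence "B y" unfolding A_B_C_def by simp
    thus "y = wb" using uB[of y wb] wb y by simp
  qed
  moreover have "\<exists>!u. Pcub s u = 0 \<and> Im u < 0 \<and> 0 < Re u"
  proof (rule ex1I[of _ wc])
    show "Pcub s wc = 0 \<and> Im wc < 0 \<and> 0 < Re wc" using wc unfolding A_B_C_def by simp
    fix y assume y: "Pcub s y = 0 \<and> Im y < 0 \<and> 0 < Re y"
    hence "C y" unfolding A_B_C_def by simp
    thus "y = wc" using uC[of y wc] wc y by simp
  qed
  ultimately show ?thesis by (intro conjI)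
qed

lemma root_norm:
  assumes "Pcub s u = 0" "cmod s < 21/4"
  shows "cmod u < 5"
proof (rule ccontr)
  assume "\<not> cmod u < 5"
  hence u5: "cmod u \<ge> 5" by simp
  have "u^2 * (u/3 + 1) + s = Pcub s u" unfolding Pcub_def
    by (simp add: algebra_simps power3_eq_cube power2_eq_square)
  hence "u^2 * (u/3 + 1) = -s" using assms(1) by (simp add: eq_neg_iff_add_eq_0)
  hence h1: "cmod (u^2 * (u/3 + 1)) = cmod s" by (metis norm_minus_cancel)
  have "cmod (u/3 + 1) \<ge> cmod u / 3 - 1"
    using norm_triangle_ineq2[of "u/3" "-1"] by simp
  hence h2: "cmod (u/3 + 1) \<ge> 2/3" using u5 by simp
  have "(5::real)^2 \<le> (cmod u)^2" by (rule power_mono[OF u5]) simp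
  hence h3: "cmod (u^2) \<ge> 25" by (simp add: norm_power)
  have "25 * (2/3) \<le> cmod (u^2) * cmod (u/3 + 1)" using h2 h3 by (intro mult_mono) auto
  hence "cmod s \<ge> 25 * (2/3)" using h1 by (simp add: norm_mult)
  thus False using assms(2) by simp
qed

lemma outside_ray:
  fixes z d :: complex
  assumes "\<And>t. t \<ge> 0 \<Longrightarrow> z + of_real t * d \<notin> S" "d \<noteq> 0"
  shows "z \<in> outside S"
proof -
  define C where "C = (\<lambda>t. z + of_real t * d) ` {0..}"
  have "connected C" unfolding C_def
    by (intro connected_continuous_image continuous_intros) (auto simp: is_interval_connected is_interval_ci)
  moreover have "z \<in> C" unfolding C_def by (auto intro: image_eqI[of _ _ 0])
  moreover have "C \<subseteq> - S" unfolding C_def using assms(1) by auto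
  ultimately have sub: "C \<subseteq> connected_component_set (- S) z" by (meson connected_component_maximal)
  have "\<not> bounded C"
  proof
    assume "bounded C"
    then obtain B where B: "\<And>x. x \<in> C \<Longrightarrow> cmod x \<le> B" by (meson bounded_iff)
    define t where "t = (B + cmod z + 1) / cmod d"
    have "B + cmod z + 1 > 0" using B[OF \<open>z \<in> C\<close>] norm_ge_zero[of z] by linarith
    hence t0: "t \<ge> 0" unfolding t_def by simp
    have "z + of_real t * d \<in> C" unfolding C_def using t0 by auto
    hence "cmod (z + of_real t * d) \<le> B" by (rule B)
    moreover have "cmod (of_real t * d) \<le> cmod (z + of_real t * d) + cmod z"
      using norm_triangle_ineq4[of "z + of_real t * d" z] by simp
    moreover have "cmod (of_real t * d) = B + cmod z + 1"
    proof -
      have "cmod (of_real t * d) = t * cmod d" using t0 by (simp add: norm_mult)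
      also have "\<dots> = B + cmod z + 1" unfolding t_def using assms(2) by simp
      finally show ?thesis .
    qed
    ultimately show False by simp
  qed
  hence "\<not> bounded (connected_component_set (- S) z)" using sub bounded_subset by blast
  thus ?thesis unfolding outside by simp
qed

lemma inside_wn:
  assumes "path g" "pathfinish g = pathstart g" "z \<notin> path_image g" "winding_number g z \<noteq> 0"
  shows "z \<in> inside (path_image g)"
proof -
  have "z \<notin> outside (path_image g)" using winding_number_zero_in_outside[OF assms(1,2)] assms(4) by blast
  thus ?thesis using assms(3) inside_Un_outside[of "path_image g"] by blast
qed

lemma seg_param:
  assumes "w \<in> closed_segment a b"
  obtains u where "0 \<le> u" "u \<le> 1" "Re w = (1-u)*Re a + u*Re b" "Im w = (1-u)*Im a + u*Im b"
  using assms unfolding closed_segment_def by (auto simp: scaleR_conv_of_real)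

lemma e2pi: "exp (\<i> * (2 * complex_of_real pi)) = 1"
proof -
  have "\<i> * (2 * complex_of_real pi) = 2 * of_real pi * \<i>" by (simp add: algebra_simps)
  thus ?thesis by (simp only: exp_two_pi_i)
qed

lemma arc_ends: "pathstart (part_circlepath 0 6 pi (2*pi)) = -6" "pathfinish (part_circlepath 0 6 pi (2*pi)) = 6"
  by (simp_all add: e2pi)

lemma Cpath_img: "path_image Cpath = closed_segment u0 (-6) \<union> path_image (part_circlepath 0 6 pi (2*pi)) \<union>
   closed_segment 6 ((1 + \<i>)/3) \<union> closed_segment ((1 + \<i>)/3) (-(1 + \<i>)) \<union>
   closed_segment (-(1 + \<i>)) (-2 + (-1 + \<i>)/3) \<union> closed_segment (-2 + (-1 + \<i>)/3) (-3 + \<i>/3) \<union>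
   closed_segment (-3 + \<i>/3) u0"
  unfolding Cpath_def by (simp add: path_image_join arc_ends Un_assoc del: pathfinish_part_circlepath pathstart_part_circlepath)

lemma Cpath_path: "path Cpath" "valid_path Cpath" "pathstart Cpath = u0" "pathfinish Cpath = u0"
  unfolding Cpath_def by (simp_all add: arc_ends del: pathfinish_part_circlepath pathstart_part_circlepath)

lemma C0_img: "path_image C0hat = closed_segment (-1) (-1 - 6*\<i>) \<union> closed_segment (-1 - 6*\<i>) (6 - 6*\<i>) \<union>
  closed_segment (6 - 6*\<i>) (6 + 6*\<i>) \<union> closed_segment (6 + 6*\<i>) (-6 + 6*\<i>) \<union>
  closed_segment (-6 + 6*\<i>) (-6) \<union> closed_segment (-6) (-1)"
  unfolding C0hat_def by (simp add: path_image_join Un_assoc)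

lemma C0_path: "path C0hat" "valid_path C0hat" "pathstart C0hat = -1" "pathfinish C0hat = -1"
  unfolding C0hat_def by simp_all

lemma arc_prop:
  assumes "w \<in> path_image (part_circlepath 0 6 pi (2*pi))"
  shows "cmod w = 6" "Im w \<le> 0"
proof -
  obtain x where x: "x \<in> closed_segment pi (2*pi)" "w = 6 * cis x"
    using assms unfolding path_image_part_circlepath' by auto
  have "pi \<le> x" "x \<le> 2*pi" using x(1) by (auto simp: closed_segment_eq_real_ivl)
  hence "sin (x - pi) \<ge> 0" by (intro sin_ge_zero) auto
  hence "sin x \<le> 0" by (simp add: sin_diff)
  thus "Im w \<le> 0" using x(2) by simp
  show "cmod w = 6" using x(2) by (simp add: norm_mult)
qed

definition "V2 = {w. Im w > 0 \<and> (Re w + 1)^2 < 1 + (Im w)^2/3}"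
definition "WC = {w. cmod w < 6 \<and> Im w < 0 \<and> Im w < \<bar>Re w + 1\<bar> - 1}"
definition "W0 = {w. \<bar>Re w\<bar> < 6 \<and> \<bar>Im w\<bar> < 6 \<and> (Re w > -1 \<or> Im w > 0)}"
definition "V1 = {w. -6 < Re w \<and> Re w < -1 \<and> Im w < 0}"

lemma sq_help:
  fixes a y :: real
  assumes "\<bar>a\<bar> \<ge> 4/3" "\<bar>y\<bar> \<le> 1/3"
  shows "a^2 \<ge> 1 + y^2/3"
proof -
  have "(4/3)^2 \<le> \<bar>a\<bar>^2" using assms(1) by (intro power_mono) auto
  moreover have "\<bar>y\<bar>^2 \<le> (1/3)^2" using assms(2) by (intro power_mono) auto
  ultimately show ?thesis by (simp add: power2_eq_square)
qed

lemma notV2: "\<bar>Re w + 1\<bar> \<ge> 4/3 \<Longrightarrow> \<bar>Im w\<bar> \<le> 1/3 \<Longrightarrow> w \<notin> V2"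
  using sq_help[of "Re w + 1" "Im w"] unfolding V2_def by auto

lemma Cpath_avoid:
  assumes "w \<in> path_image Cpath"
  shows "w \<notin> V2" "w \<notin> WC"
proof -
  have "(w \<notin> V2) \<and> (w \<notin> WC)"
  proof -
    consider "w \<in> closed_segment u0 (-6)" | "w \<in> path_image (part_circlepath 0 6 pi (2*pi))" |
      "w \<in> closed_segment 6 ((1 + \<i>)/3)" | "w \<in> closed_segment ((1 + \<i>)/3) (-(1 + \<i>))" |
      "w \<in> closed_segment (-(1 + \<i>)) (-2 + (-1 + \<i>)/3)" | "w \<in> closed_segment (-2 + (-1 + \<i>)/3) (-3 + \<i>/3)" |
      "w \<in> closed_segment (-3 + \<i>/3) u0"
      using assms unfolding Cpath_img by blast
    thus ?thesis
    proof cases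
      case 1
      then obtain u where "Im w = 0" by (rule seg_param) (simp add: u0_def)
      thus ?thesis unfolding V2_def WC_def by simp
    next
      case 2
      thus ?thesis using arc_prop[OF 2] unfolding V2_def WC_def by auto
    next
      case 3
      then obtain u where u: "0 \<le> u" "u \<le> 1" "Re w = (1-u)*6 + u/3" "Im w = u/3" by (rule seg_param) simp
      hence "w \<notin> V2" by (intro notV2) auto
      thus ?thesis using u unfolding WC_def by simp
    next
      case 4
      then obtain u where u: "0 \<le> u" "u \<le> 1" "Re w = (1-u)/3 - u" "Im w = (1-u)/3 - u" by (rule seg_param) simp
      have "w \<notin> V2"
      proof
        assume "w \<in> V2"
        hence "Im w > 0" "(Re w + 1)^2 < 1 + (Im w)^2/3" unfolding V2_def by auto
        moreover have "Re w = Im w" using u by simp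
        hence "(Re w + 1)^2 = 1 + 2 * Im w + (Im w)^2" by (simp add: power2_eq_square algebra_simps)
        ultimately show False using zero_le_power2[of "Im w"] by linarith
      qed
      moreover have "w \<notin> WC" using u unfolding WC_def by (auto split: abs_split)
      ultimately show ?thesis by simp
    next
      case 5
      then obtain u where u: "0 \<le> u" "u \<le> 1" "Re w = -(1-u) + u*(-7/3)" "Im w = -(1-u) + u/3" by (rule seg_param) simp
      have "w \<notin> V2"
      proof
        assume "w \<in> V2"
        hence "Im w > 0" "(Re w + 1)^2 < 1 + (Im w)^2/3" unfolding V2_def by auto
        moreover have h: "Re w = - Im w - 2" using u by simp
        have "(Re w + 1)^2 = 1 + 2 * Im w + (Im w)^2" unfolding h by (simp add: power2_eq_square algebra_simps)
        ultimately show False using zero_le_power2[of "Im w"] by linarith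
      qed
      moreover have "w \<notin> WC" using u unfolding WC_def by (auto split: abs_split)
      ultimately show ?thesis by simp
    next
      case 6
      then obtain u where u0: "0 \<le> u" "u \<le> 1" "Re w = (1-u)*Re (-2 + (-1 + \<i>)/3) + u*Re (-3 + \<i>/3)"
          "Im w = (1-u)*Im (-2 + (-1 + \<i>)/3) + u*Im (-3 + \<i>/3)" by (rule seg_param)
      hence u: "Im w = 1/3" "Re w \<le> -7/3" by (simp_all add: field_simps)
      hence "w \<notin> V2" by (intro notV2) auto
      thus ?thesis using u unfolding WC_def by simp
    next
      case 7
      then obtain u where u0: "0 \<le> u" "u \<le> 1" "Re w = (1-u)*Re (-3 + \<i>/3) + u*Re u0"
          "Im w = (1-u)*Im (-3 + \<i>/3) + u*Im u0" by (rule seg_param)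
      hence u: "Im w \<ge> 0" "Im w \<le> 1/3" "Re w \<le> -3" by (simp_all add: field_simps u0_def)
      hence "w \<notin> V2" by (intro notV2) auto
      thus ?thesis using u unfolding WC_def by simp
    qed
  qed
  thus "w \<notin> V2" "w \<notin> WC" by auto
qed

lemma C0_avoid:
  assumes "w \<in> path_image C0hat"
  shows "w \<notin> W0" "w \<notin> V1"
proof -
  have "(w \<notin> W0) \<and> (w \<notin> V1)"
  proof -
    consider "w \<in> closed_segment (-1) (-1 - 6*\<i>)" | "w \<in> closed_segment (-1 - 6*\<i>) (6 - 6*\<i>)" |
      "w \<in> closed_segment (6 - 6*\<i>) (6 + 6*\<i>)" | "w \<in> closed_segment (6 + 6*\<i>) (-6 + 6*\<i>)" |
      "w \<in> closed_segment (-6 + 6*\<i>) (-6)" | "w \<in> closed_segment (-6) (-1)"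
      using assms unfolding C0_img by blast
    thus ?thesis
    proof cases
      case 1
      then obtain u where u: "0 \<le> u" "u \<le> 1" "Re w = (1-u)*Re (-1) + u*Re (-1 - 6*\<i>)"
          "Im w = (1-u)*Im (-1) + u*Im (-1 - 6*\<i>)" by (rule seg_param)
      thus ?thesis unfolding W0_def V1_def by (auto simp: field_simps)
    next
      case 2
      then obtain u where u: "0 \<le> u" "u \<le> 1" "Re w = (1-u)*Re (-1 - 6*\<i>) + u*Re (6 - 6*\<i>)"
          "Im w = (1-u)*Im (-1 - 6*\<i>) + u*Im (6 - 6*\<i>)" by (rule seg_param)
      thus ?thesis unfolding W0_def V1_def by (auto simp: field_simps)
    next
      case 3
      then obtain u where u: "0 \<le> u" "u \<le> 1" "Re w = (1-u)*Re (6 - 6*\<i>) + u*Re (6 + 6*\<i>)"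
          "Im w = (1-u)*Im (6 - 6*\<i>) + u*Im (6 + 6*\<i>)" by (rule seg_param)
      thus ?thesis unfolding W0_def V1_def by (auto simp: field_simps)
    next
      case 4
      then obtain u where u: "0 \<le> u" "u \<le> 1" "Re w = (1-u)*Re (6 + 6*\<i>) + u*Re (-6 + 6*\<i>)"
          "Im w = (1-u)*Im (6 + 6*\<i>) + u*Im (-6 + 6*\<i>)" by (rule seg_param)
      thus ?thesis unfolding W0_def V1_def by (auto simp: field_simps)
    next
      case 5
      then obtain u where u: "0 \<le> u" "u \<le> 1" "Re w = (1-u)*Re (-6 + 6*\<i>) + u*Re (-6)"
          "Im w = (1-u)*Im (-6 + 6*\<i>) + u*Im (-6)" by (rule seg_param)
      thus ?thesis unfolding W0_def V1_def by (auto simp: field_simps)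
    next
      case 6
      then obtain u where u: "0 \<le> u" "u \<le> 1" "Re w = (1-u)*Re (-6) + u*Re (-1)"
          "Im w = (1-u)*Im (-6) + u*Im (-1)" by (rule seg_param)
      thus ?thesis unfolding W0_def V1_def by (auto simp: field_simps)
    qed
  qed
  thus "w \<notin> W0" "w \<notin> V1" by auto
qed

lemma Ln_aff_deriv:
  fixes a b w :: complex
  assumes "a*w + b \<notin> \<real>\<^sub>\<le>\<^sub>0" "a \<noteq> 0"
  shows "((\<lambda>w. Ln(a*w+b)) has_field_derivative 1/(w + b/a)) (at w within S)"
proof -
  have d: "((\<lambda>w. a*w+b) has_field_derivative a) (at w within S)"
    by (auto intro!: derivative_eq_intros)
  have "((\<lambda>w. Ln(a*w+b)) has_field_derivative inverse (a*w+b) * a) (at w within S)"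
    by (rule DERIV_chain2[OF has_field_derivative_Ln[OF assms(1)] d])
  moreover have "inverse (a*w+b) * a = 1/(w + b/a)" using assms(2)
    by (simp add: field_simps)
  ultimately show ?thesis by simp
qed

lemma seg_Im_ge: "w \<in> closed_segment a b \<Longrightarrow> Im a \<ge> c \<Longrightarrow> Im b \<ge> c \<Longrightarrow> Im w \<ge> c"
proof -
  assume "w \<in> closed_segment a b" "Im a \<ge> c" "Im b \<ge> c"
  from \<open>w \<in> closed_segment a b\<close> obtain u where u: "0 \<le> u" "u \<le> 1" "Re w = (1-u)*Re a + u*Re b" "Im w = (1-u)*Im a + u*Im b"
    by (rule seg_param)
  have "(1-u)*Im a \<ge> (1-u)*c" "u*Im b \<ge> u*c" using u \<open>Im a \<ge> c\<close> \<open>Im b \<ge> c\<close> by (auto intro: mult_left_mono)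
  thus ?thesis using u(4) by (simp add: algebra_simps)
qed

lemma wn_Cpath: "winding_number Cpath (-3*\<i>) = 1"
proof -
  define f where "f = (\<lambda>w::complex. 1/(w - -3*\<i>))"
  define F where "F = (\<lambda>w. Ln(1*w + 3*\<i>))"
  define G where "G = (\<lambda>w. Ln(\<i>*w + (-3)))"
  define SF where "SF = {w. Im w \<ge> -1}"
  define SG where "SG = {w. cmod w = 6 \<and> Im w \<le> 0}"
  have dF: "(F has_field_derivative f w) (at w within SF)" if "w \<in> SF" for w
  proof -
    have "1*w + 3*\<i> \<notin> \<real>\<^sub>\<le>\<^sub>0" using that unfolding SF_def by (auto simp: complex_nonpos_Reals_iff)
    from Ln_aff_deriv[OF this] show ?thesis unfolding F_def f_def by simp
  qed
  have dG: "(G has_field_derivative f w) (at w within SG)" if "w \<in> SG" for w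
  proof -
    have "\<i>*w + (-3) \<notin> \<real>\<^sub>\<le>\<^sub>0"
    proof
      assume "\<i>*w + (-3) \<in> \<real>\<^sub>\<le>\<^sub>0"
      hence "Re w = 0" "- Im w - 3 \<le> 0" by (auto simp: complex_nonpos_Reals_iff)
      moreover have "cmod w = 6" "Im w \<le> 0" using that unfolding SG_def by auto
      moreover have "cmod w = \<bar>Im w\<bar>" using \<open>Re w = 0\<close> by (simp add: cmod_def)
      ultimately show False by linarith
    qed
    from Ln_aff_deriv[OF this] have "(G has_field_derivative 1/(w + (-3)/\<i>)) (at w within SG)"
      unfolding G_def by simp
    moreover have "(-3)/\<i> = 3*\<i>" by (simp add: field_simps)
    ultimately show ?thesis unfolding f_def by (simp add: mult.commute)
  qed
  define Rest where "Rest = linepath 6 ((1 + \<i>)/3) +++ linepath ((1 + \<i>)/3) (-(1 + \<i>)) +++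
           linepath (-(1 + \<i>)) (-2 + (-1 + \<i>)/3) +++
           linepath (-2 + (-1 + \<i>)/3) (-3 + \<i>/3) +++
           linepath (-3 + \<i>/3) u0"
  define arc where "arc = part_circlepath 0 6 pi (2*pi)"
  have Cp: "Cpath = linepath u0 (-6) +++ arc +++ Rest" unfolding Cpath_def Rest_def arc_def ..
  have vR: "valid_path Rest" "pathstart Rest = 6" "pathfinish Rest = u0" unfolding Rest_def by simp_all
  have iR: "path_image Rest \<subseteq> SF"
  proof
    fix w assume "w \<in> path_image Rest"
    hence "w \<in> closed_segment 6 ((1 + \<i>)/3) \<or> w \<in> closed_segment ((1 + \<i>)/3) (-(1 + \<i>)) \<or>
      w \<in> closed_segment (-(1 + \<i>)) (-2 + (-1 + \<i>)/3) \<or> w \<in> closed_segment (-2 + (-1 + \<i>)/3) (-3 + \<i>/3) \<or>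
      w \<in> closed_segment (-3 + \<i>/3) u0" unfolding Rest_def by (simp add: path_image_join)
    moreover have m: "\<And>a b. w \<in> closed_segment a b \<Longrightarrow> Im a \<ge> -1 \<Longrightarrow> Im b \<ge> -1 \<Longrightarrow> Im w \<ge> -1"
      by (rule seg_Im_ge)
    ultimately show "w \<in> SF" unfolding SF_def mem_Collect_eq
      using m[of 6 "(1 + \<i>)/3"] m[of "(1 + \<i>)/3" "-(1 + \<i>)"] m[of "-(1 + \<i>)" "-2 + (-1 + \<i>)/3"]
        m[of "-2 + (-1 + \<i>)/3" "-3 + \<i>/3"] m[of "-3 + \<i>/3" u0] by (auto simp: u0_def)
  qed
  have s1: "closed_segment u0 (-6) \<subseteq> SF"
  proof
    fix w assume "w \<in> closed_segment u0 (-6)"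
    thus "w \<in> SF" unfolding SF_def mem_Collect_eq using seg_Im_ge[of w u0 "-6" "-1"] by (simp add: u0_def)
  qed
  have i1: "(f has_contour_integral (F (-6) - F u0)) (linepath u0 (-6))"
    using contour_integral_primitive[OF dF, of "linepath u0 (-6)"] s1 by simp
  have i2: "(f has_contour_integral (G 6 - G (-6))) arc"
    using contour_integral_primitive[OF dG, of arc] arc_prop arc_ends unfolding arc_def SG_def by auto
  have i3: "(f has_contour_integral (F u0 - F 6)) Rest"
    using contour_integral_primitive[OF dF, of Rest] vR iR by auto
  have "(f has_contour_integral ((F (-6) - F u0) + ((G 6 - G (-6)) + (F u0 - F 6)))) Cpath"
    unfolding Cp
    by (intro has_contour_integral_join i1 i2 i3 valid_path_join) (auto simp: arc_def arc_ends vR e2pi)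
  hence ci: "contour_integral Cpath f = F (-6) - F 6 + G 6 - G (-6)"
    by (auto dest: contour_integral_unique)
  define A B where "A = Ln (6 + 3*\<i>)" "B = Ln (-6 + 3*\<i>)"
  have "G 6 = Ln (\<i> * (6 + 3*\<i>))" "G (-6) = Ln (\<i> * (-6 + 3*\<i>))"
    unfolding G_def by (simp_all add: algebra_simps)
  moreover have "Ln (\<i> * (6 + 3*\<i>)) = A + \<i> * of_real pi/2" unfolding A_B_def
    by (subst Ln_times_ii) (auto simp: complex_eq_iff)
  moreover have "Ln (\<i> * (-6 + 3*\<i>)) = B - \<i> * of_real (3*pi/2)" unfolding A_B_def
    by (subst Ln_times_ii) (auto simp: complex_eq_iff)
  ultimately have g: "G 6 = A + \<i> * of_real pi/2" "G (-6) = B - \<i> * of_real (3*pi/2)" by simp_all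
  have fF: "F (-6) = B" "F 6 = A" unfolding F_def A_B_def by simp_all
  have "contour_integral Cpath f = B - A + (A + \<i> * of_real pi/2) - (B - \<i> * of_real (3*pi/2))"
    unfolding ci g fF ..
  also have "\<dots> = 2 * pi * \<i>" by (simp add: field_simps)
  finally have "contour_integral Cpath f = 2 * pi * \<i>" .
  moreover have "-3*\<i> \<notin> path_image Cpath"
  proof
    assume "-3*\<i> \<in> path_image Cpath"
    hence "-3*\<i> \<notin> WC" by (rule Cpath_avoid)
    thus False unfolding WC_def by simp
  qed
  ultimately show ?thesis using winding_number_valid_path[OF Cpath_path(2)] unfolding f_def by simp
qed

lemma seg_in:
  assumes "w \<in> closed_segment a b"
    "\<And>u. 0 \<le> u \<Longrightarrow> u \<le> 1 \<Longrightarrow> P (Complex ((1-u)*Re a + u*Re b) ((1-u)*Im a + u*Im b))"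
  shows "P w"
proof -
  obtain u where u: "0 \<le> u" "u \<le> 1" "Re w = (1-u)*Re a + u*Re b" "Im w = (1-u)*Im a + u*Im b"
    using assms(1) by (rule seg_param)
  have "w = Complex ((1-u)*Re a + u*Re b) ((1-u)*Im a + u*Im b)" using u(3,4) by (simp add: complex_eq_iff)
  thus ?thesis using assms(2)[OF u(1,2)] by simp
qed

lemma wn_C0: "winding_number C0hat 2 = 1"
proof -
  define f where "f = (\<lambda>w::complex. 1/(w - 2))"
  define F where "F = (\<lambda>w. Ln(1*w + (-2)))"
  define G where "G = (\<lambda>w. Ln((-1)*w + 2))"
  define SF where "SF = {w. Re w > 2}"
  define SG where "SG = {w. Re w < 2 \<or> Im w \<noteq> 0}"
  have dF: "(F has_field_derivative f w) (at w within SF)" if "w \<in> SF" for w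
  proof -
    have "1*w + (-2) \<notin> \<real>\<^sub>\<le>\<^sub>0" using that unfolding SF_def by (auto simp: complex_nonpos_Reals_iff)
    from Ln_aff_deriv[OF this] show ?thesis unfolding F_def f_def by simp
  qed
  have dG: "(G has_field_derivative f w) (at w within SG)" if "w \<in> SG" for w
  proof -
    have "(-1)*w + 2 \<notin> \<real>\<^sub>\<le>\<^sub>0" using that unfolding SG_def by (auto simp: complex_nonpos_Reals_iff)
    from Ln_aff_deriv[OF this] show ?thesis unfolding G_def f_def by simp
  qed
  define P1 P2 P3 Q where "P1 = linepath (-1) (-1 - 6*\<i>)" "P2 = linepath (-1 - 6*\<i>) (6 - 6*\<i>)"
    "P3 = linepath (6 - 6*\<i>) (6 + 6*\<i>)"
    "Q = linepath (6 + 6*\<i>) (-6 + 6*\<i>) +++ linepath (-6 + 6*\<i>) (-6) +++ linepath (-6) (-1)"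
  have Cp: "C0hat = P1 +++ P2 +++ P3 +++ Q" unfolding C0hat_def P1_P2_P3_Q_def ..
  have vQ: "valid_path Q" "pathstart Q = 6 + 6*\<i>" "pathfinish Q = -1" unfolding P1_P2_P3_Q_def by simp_all
  have iQ: "path_image Q \<subseteq> SG"
  proof
    fix w assume "w \<in> path_image Q"
    hence "w \<in> closed_segment (6 + 6*\<i>) (-6 + 6*\<i>) \<or> w \<in> closed_segment (-6 + 6*\<i>) (-6) \<or>
      w \<in> closed_segment (-6) (-1)" unfolding P1_P2_P3_Q_def by (simp add: path_image_join)
    thus "w \<in> SG"
    proof (elim disjE)
      assume "w \<in> closed_segment (6 + 6*\<i>) (-6 + 6*\<i>)"
      thus ?thesis by (rule seg_in) (simp add: SG_def)
    next
      assume "w \<in> closed_segment (-6 + 6*\<i>) (-6)"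
      thus ?thesis by (rule seg_in) (simp add: SG_def)
    next
      assume "w \<in> closed_segment (-6) (-1)"
      thus ?thesis by (rule seg_in) (simp add: SG_def field_simps)
    qed
  qed
  have i1: "(f has_contour_integral (G (-1 - 6*\<i>) - G (-1))) P1"
  proof -
    have "closed_segment (-1) (-1 - 6*\<i>) \<subseteq> SG"
    proof
      fix w assume "w \<in> closed_segment (-1) (-1 - 6*\<i>)"
      thus "w \<in> SG" by (rule seg_in) (simp add: SG_def field_simps)
    qed
    thus ?thesis using contour_integral_primitive[OF dG, of P1] unfolding P1_P2_P3_Q_def by simp
  qed
  have i2: "(f has_contour_integral (G (6 - 6*\<i>) - G (-1 - 6*\<i>))) P2"
  proof -
    have "closed_segment (-1 - 6*\<i>) (6 - 6*\<i>) \<subseteq> SG"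
    proof
      fix w assume "w \<in> closed_segment (-1 - 6*\<i>) (6 - 6*\<i>)"
      thus "w \<in> SG" by (rule seg_in) (simp add: SG_def field_simps)
    qed
    thus ?thesis using contour_integral_primitive[OF dG, of P2] unfolding P1_P2_P3_Q_def by simp
  qed
  have i3: "(f has_contour_integral (F (6 + 6*\<i>) - F (6 - 6*\<i>))) P3"
  proof -
    have "closed_segment (6 - 6*\<i>) (6 + 6*\<i>) \<subseteq> SF"
    proof
      fix w assume "w \<in> closed_segment (6 - 6*\<i>) (6 + 6*\<i>)"
      thus "w \<in> SF" by (rule seg_in) (simp add: SF_def field_simps)
    qed
    thus ?thesis using contour_integral_primitive[OF dF, of P3] unfolding P1_P2_P3_Q_def by simp
  qed
  have i4: "(f has_contour_integral (G (-1) - G (6 + 6*\<i>))) Q"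
    using contour_integral_primitive[OF dG, of Q] vQ iQ by auto
  have "(f has_contour_integral ((G (-1 - 6*\<i>) - G (-1)) + ((G (6 - 6*\<i>) - G (-1 - 6*\<i>)) +
      ((F (6 + 6*\<i>) - F (6 - 6*\<i>)) + (G (-1) - G (6 + 6*\<i>)))))) C0hat"
    unfolding Cp
    by (intro has_contour_integral_join i1 i2 i3 i4 valid_path_join) (auto simp: P1_P2_P3_Q_def vQ)
  hence ci: "contour_integral C0hat f = G (6 - 6*\<i>) - G (6 + 6*\<i>) + F (6 + 6*\<i>) - F (6 - 6*\<i>)"
    by (auto dest: contour_integral_unique)
  define A B where "A = Ln (4 + 6*\<i>)" "B = Ln (4 - 6*\<i>)"
  have "G (6 - 6*\<i>) = Ln (- (4 - 6*\<i>))" "G (6 + 6*\<i>) = Ln (- (4 + 6*\<i>))"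
    unfolding G_def by (simp_all add: algebra_simps)
  moreover have "Ln (- (4 - 6*\<i>)) = B + \<i> * pi" unfolding A_B_def
    by (subst Ln_minus) (auto simp: complex_eq_iff)
  moreover have "Ln (- (4 + 6*\<i>)) = A - \<i> * pi" unfolding A_B_def
    by (subst Ln_minus) (auto simp: complex_eq_iff)
  ultimately have g: "G (6 - 6*\<i>) = B + \<i> * pi" "G (6 + 6*\<i>) = A - \<i> * pi" by simp_all
  have fF: "F (6 + 6*\<i>) = A" "F (6 - 6*\<i>) = B" unfolding F_def A_B_def by (simp_all add: algebra_simps)
  have "contour_integral C0hat f = (B + \<i> * pi) - (A - \<i> * pi) + A - B"
    unfolding ci g fF ..
  also have "\<dots> = 2 * pi * \<i>" by (simp add: field_simps)
  finally have "contour_integral C0hat f = 2 * pi * \<i>" .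
  moreover have "2 \<notin> path_image C0hat"
  proof
    assume "2 \<in> path_image C0hat"
    hence "2 \<notin> W0" by (rule C0_avoid)
    thus False unfolding W0_def by simp
  qed
  ultimately show ?thesis using winding_number_valid_path[OF C0_path(2)] unfolding f_def by simp
qed

lemma uq_lt2:
  fixes u q :: real
  assumes "0 \<le> u" "u \<le> 1" "q < 2"
  shows "u * q < 2"
proof (cases "q \<le> 0")
  case True hence "u * q \<le> 0" using assms by (simp add: mult_nonneg_nonpos)
  thus ?thesis by simp
next
  case False
  hence "u * q \<le> 1 * q" using assms by (intro mult_right_mono) auto
  thus ?thesis using assms by simp
qed

lemma WC_starlike: "starlike WC"
  unfolding starlike_def
proof (intro bexI ballI)
  show c: "-1 - 3*\<i> \<in> WC" unfolding WC_def by (simp add: cmod_def real_less_lsqrt)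
  fix x assume x: "x \<in> WC"
  show "closed_segment (-1 - 3*\<i>) x \<subseteq> WC"
  proof
    fix p assume p: "p \<in> closed_segment (-1 - 3*\<i>) x"
    have "closed_segment (-1 - 3*\<i>) x \<subseteq> ball 0 6"
      using c x unfolding WC_def by (intro closed_segment_subset) (auto simp: convex_ball)
    hence "cmod p < 6" using p by auto
    moreover from p obtain u where u: "0 \<le> u" "u \<le> 1" "Re p = (1-u)*Re (-1 - 3*\<i>) + u*Re x"
      "Im p = (1-u)*Im (-1 - 3*\<i>) + u*Im x" by (rule seg_param)
    have xi: "Im x < 0" "Im x < \<bar>Re x + 1\<bar> - 1" using x unfolding WC_def by auto
    have "Im p = -3 + 3*u + u * Im x" using u by (simp add: algebra_simps)
    moreover have "Re p + 1 = u * (Re x + 1)" using u by (simp add: algebra_simps)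
    hence "\<bar>Re p + 1\<bar> = u * \<bar>Re x + 1\<bar>" using u by (simp add: abs_mult)
    moreover have "u * (3 + Im x - \<bar>Re x + 1\<bar>) < 2" using u xi by (intro uq_lt2) auto
    moreover have "u * Im x \<le> 0" using u xi by (simp add: mult_nonneg_nonpos)
    moreover have "u < 1 \<or> u * Im x < 0" using xi by (cases "u = 1") (use u in auto)
    ultimately have "Im p < 0" "Im p < \<bar>Re p + 1\<bar> - 1" using u(1,2) by (auto simp: algebra_simps)
    thus "p \<in> WC" unfolding WC_def using \<open>cmod p < 6\<close> by simp
  qed
qed

lemma W0_starlike: "starlike W0"
  unfolding starlike_def
proof (intro bexI ballI)
  show c: "2 \<in> W0" unfolding W0_def by simp
  fix x assume x: "x \<in> W0"
  show "closed_segment 2 x \<subseteq> W0"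
  proof
    fix p assume p: "p \<in> closed_segment 2 x"
    from p obtain u where u: "0 \<le> u" "u \<le> 1" "Re p = (1-u)*Re 2 + u*Re x"
      "Im p = (1-u)*Im 2 + u*Im x" by (rule seg_param)
    have xi: "\<bar>Re x\<bar> < 6" "\<bar>Im x\<bar> < 6" "Re x > -1 \<or> Im x > 0" using x unfolding W0_def by auto
    have r: "Re p = 2*(1-u) + u * Re x" "Im p = u * Im x" using u by simp_all
    have "u * \<bar>Re x\<bar> \<le> u * 6" "u * \<bar>Im x\<bar> \<le> u * 6" using u xi by (intro mult_left_mono; simp)+
    hence a1: "\<bar>u * Re x\<bar> \<le> 6 * u" "\<bar>u * Im x\<bar> \<le> 6 * u" using u by (simp_all add: abs_mult)
    have b1: "u * \<bar>Re x\<bar> \<le> \<bar>Re x\<bar>" "u * \<bar>Im x\<bar> \<le> \<bar>Im x\<bar>" using u by (simp_all add: mult_left_le_one_le)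
    have "\<bar>Re p\<bar> \<le> \<bar>2*(1-u)\<bar> + \<bar>u * Re x\<bar>" unfolding r(1) by (rule abs_triangle_ineq)
    moreover have "\<bar>2*(1-u)\<bar> = 2*(1-u)" "\<bar>u * Re x\<bar> = u * \<bar>Re x\<bar>" using u by (simp_all add: abs_mult)
    ultimately have "\<bar>Re p\<bar> \<le> 2*(1-u) + u * \<bar>Re x\<bar>" by simp
    moreover have "\<bar>Im p\<bar> = u * \<bar>Im x\<bar>" unfolding r(2) using u by (simp add: abs_mult)
    ultimately have "\<bar>Re p\<bar> < 6" "\<bar>Im p\<bar> < 6" using a1 b1 u xi by (auto simp: abs_mult)
    moreover have "Re p > -1 \<or> Im p > 0"
    proof (cases "Re x > -1")
      case True
      show ?thesis
      proof (cases "u = 0")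
        case True thus ?thesis using r by simp
      next
        case False
        hence "u * Re x > u * (-1)" using u \<open>Re x > -1\<close> by (intro mult_strict_left_mono) auto
        thus ?thesis using r u by auto
      qed
    next
      case False
      hence "Im x > 0" using xi by auto
      show ?thesis
      proof (cases "u = 0")
        case True thus ?thesis using r by simp
      next
        case False thus ?thesis using r u \<open>Im x > 0\<close> by simp
      qed
    qed
    ultimately show "p \<in> W0" unfolding W0_def by simp
  qed
qed

lemma inside_Cpath: "z \<in> WC \<Longrightarrow> z \<in> inside (path_image Cpath)"
proof -
  assume z: "z \<in> WC"
  have dis: "WC \<inter> path_image Cpath = {}" using Cpath_avoid by blast
  have "winding_number Cpath constant_on WC"
    by (rule winding_number_constant[OF Cpath_path(1) _ starlike_imp_connected[OF WC_starlike] dis])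
      (simp add: Cpath_path)
  moreover have "-3*\<i> \<in> WC" unfolding WC_def by simp
  ultimately have "winding_number Cpath z = 1" using z wn_Cpath unfolding constant_on_def by metis
  moreover have "z \<notin> path_image Cpath" using z dis by blast
  ultimately show ?thesis by (intro inside_wn) (simp_all add: Cpath_path)
qed

lemma inside_C0: "z \<in> W0 \<Longrightarrow> z \<in> inside (path_image C0hat)"
proof -
  assume z: "z \<in> W0"
  have dis: "W0 \<inter> path_image C0hat = {}" using C0_avoid by blast
  have "winding_number C0hat constant_on W0"
    by (rule winding_number_constant[OF C0_path(1) _ starlike_imp_connected[OF W0_starlike] dis])
      (simp add: C0_path)
  moreover have "2 \<in> W0" unfolding W0_def by simp
  ultimately have "winding_number C0hat z = 1" using z wn_C0 unfolding constant_on_def by metis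
  moreover have "z \<notin> path_image C0hat" using z dis by blast
  ultimately show ?thesis by (intro inside_wn) (simp_all add: C0_path)
qed

definition dbound :: "(real \<Rightarrow> complex) \<Rightarrow> real \<Rightarrow> bool" where
  "dbound g B \<longleftrightarrow> (\<exists>K. finite K \<and> (\<forall>x\<in>{0<..<1} - K. \<exists>D. (g has_vector_derivative D) (at x) \<and> norm D \<le> B))"

lemma dbound_linepath: "dbound (linepath a b) (cmod (b - a))"
  unfolding dbound_def
  by (rule exI[of _ "{}"]) (auto intro!: exI[of _ "b - a"] has_vector_derivative_linepath_within)

lemma dbound_arc: "dbound (part_circlepath z r s t) (\<bar>r\<bar> * \<bar>t - s\<bar>)"
  unfolding dbound_def
proof (rule exI[of _ "{}"], intro conjI ballI)
  fix x :: real
  show "\<exists>D. (part_circlepath z r s t has_vector_derivative D) (at x) \<and> cmod D \<le> \<bar>r\<bar> * \<bar>t - s\<bar>"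
    by (rule exI, rule conjI, rule has_vector_derivative_part_circlepath)
       (simp add: norm_mult flip: of_real_diff)
qed simp

lemma dbound_join:
  assumes "dbound g1 B1" "dbound g2 B2"
  shows "dbound (g1 +++ g2) (2 * max B1 B2)"
proof -
  obtain K1 where K1: "finite K1" "\<And>x. x \<in> {0<..<1} - K1 \<Longrightarrow> \<exists>D. (g1 has_vector_derivative D) (at x) \<and> norm D \<le> B1"
    using assms(1) unfolding dbound_def by blast
  obtain K2 where K2: "finite K2" "\<And>x. x \<in> {0<..<1} - K2 \<Longrightarrow> \<exists>D. (g2 has_vector_derivative D) (at x) \<and> norm D \<le> B2"
    using assms(2) unfolding dbound_def by blast
  define K where "K = {1/2} \<union> (\<lambda>x. x/2) ` K1 \<union> (\<lambda>x. (x+1)/2) ` K2"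
  have "finite K" unfolding K_def using K1(1) K2(1) by simp
  moreover have "\<exists>D. ((g1 +++ g2) has_vector_derivative D) (at x) \<and> norm D \<le> 2 * max B1 B2"
    if x: "x \<in> {0<..<1} - K" for x
  proof (cases "x < 1/2")
    case True
    have "2*x \<in> {0<..<1} - K1"
    proof -
      have "2*x \<notin> K1"
      proof
        assume "2*x \<in> K1"
        hence "(2*x)/2 \<in> K" unfolding K_def by blast
        thus False using x by simp
      qed
      thus ?thesis using x True by auto
    qed
    then obtain D where D: "(g1 has_vector_derivative D) (at (2*x))" "norm D \<le> B1" using K1(2) by blast
    have "((\<lambda>x. 2*x) has_vector_derivative 2) (at x)"
      by (auto intro!: derivative_eq_intros simp: has_vector_derivative_def)
    hence "((g1 \<circ> (\<lambda>x. 2*x)) has_vector_derivative (2 *\<^sub>R D)) (at x)"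
      using D(1) by (rule vector_diff_chain_at)
    hence "((g1 +++ g2) has_vector_derivative (2 *\<^sub>R D)) (at x)"
      by (rule has_vector_derivative_transform_within_open[of _ _ _ "{..<1/2}"])
         (use True in \<open>auto simp: joinpaths_def\<close>)
    moreover have "norm (2 *\<^sub>R D) \<le> 2 * max B1 B2" using D(2) by simp
    ultimately show ?thesis by blast
  next
    case False
    hence x12: "x > 1/2" using x unfolding K_def by auto
    have "2*x - 1 \<in> {0<..<1} - K2"
    proof -
      have "2*x - 1 \<notin> K2"
      proof
        assume "2*x - 1 \<in> K2"
        hence "((2*x - 1)+1)/2 \<in> K" unfolding K_def by blast
        thus False using x by simp
      qed
      thus ?thesis using x x12 by auto
    qed
    then obtain D where D: "(g2 has_vector_derivative D) (at (2*x - 1))" "norm D \<le> B2" using K2(2) by blast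
    have "((\<lambda>x. 2*x - 1) has_vector_derivative 2) (at x)"
      by (auto intro!: derivative_eq_intros simp: has_vector_derivative_def)
    hence "((g2 \<circ> (\<lambda>x. 2*x - 1)) has_vector_derivative (2 *\<^sub>R D)) (at x)"
      using D(1) by (rule vector_diff_chain_at)
    hence "((g1 +++ g2) has_vector_derivative (2 *\<^sub>R D)) (at x)"
      by (rule has_vector_derivative_transform_within_open[of _ _ _ "{1/2<..}"])
         (use x12 in \<open>auto simp: joinpaths_def\<close>)
    moreover have "norm (2 *\<^sub>R D) \<le> 2 * max B1 B2" using D(2) by simp
    ultimately show ?thesis by blast
  qed
  ultimately show ?thesis unfolding dbound_def by blast
qed

lemma Cpath_dbound: "\<exists>M. dbound Cpath M"
  unfolding Cpath_def
  apply (rule exI)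
  apply (rule dbound_join dbound_linepath dbound_arc)+
  done

lemma Cpath_cball: "t \<in> {0..1} \<Longrightarrow> cmod (Cpath t) \<le> 6"
proof -
  assume "t \<in> {0..1}"
  hence w: "Cpath t \<in> path_image Cpath" unfolding path_image_def by blast
  have seg: "closed_segment a b \<subseteq> cball 0 6" if "\<bar>Re a\<bar> + \<bar>Im a\<bar> \<le> 6" "\<bar>Re b\<bar> + \<bar>Im b\<bar> \<le> 6" for a b
  proof (rule closed_segment_subset)
    show "a \<in> cball 0 6" using cmod_le[of a] that(1) by simp
    show "b \<in> cball 0 6" using cmod_le[of b] that(2) by simp
  qed (rule convex_cball)
  have "path_image Cpath \<subseteq> cball 0 6"
    unfolding Cpath_img using arc_prop(1)
    by (intro Un_least seg) (auto simp: u0_def)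
  thus ?thesis using w by auto
qed

lemma root_props:
  assumes "s \<in> Dplus (21/4)"
  shows "Pcub s (r2 s) = 0 \<and> Im (r2 s) > 0 \<and> cmod (r2 s) < 5"
    "Pcub s (r1 s) = 0 \<and> Im (r1 s) < 0 \<and> Re (r1 s) < -2 \<and> cmod (r1 s) < 5"
    "Pcub s (r3 s) = 0 \<and> Im (r3 s) < 0 \<and> Re (r3 s) > 0 \<and> cmod (r3 s) < 5"
proof -
  have s: "Im s > 0" "cmod s < 21/4" using assms unfolding Dplus_def by auto
  note rm = roots_main[OF s(1)]
  have "Pcub s (r2 s) = 0 \<and> Im (r2 s) > 0" unfolding r2_def by (rule theI') (use rm in blast)
  thus "Pcub s (r2 s) = 0 \<and> Im (r2 s) > 0 \<and> cmod (r2 s) < 5" using root_norm s(2) by blast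
  have "Pcub s (r1 s) = 0 \<and> Im (r1 s) < 0 \<and> Re (r1 s) < -2" unfolding r1_def by (rule theI') (use rm in blast)
  thus "Pcub s (r1 s) = 0 \<and> Im (r1 s) < 0 \<and> Re (r1 s) < -2 \<and> cmod (r1 s) < 5" using root_norm s(2) by blast
  have "Pcub s (r3 s) = 0 \<and> Im (r3 s) < 0 \<and> Re (r3 s) > 0" unfolding r3_def by (rule theI') (use rm in blast)
  thus "Pcub s (r3 s) = 0 \<and> Im (r3 s) < 0 \<and> Re (r3 s) > 0 \<and> cmod (r3 s) < 5" using root_norm s(2) by blast
qed

lemma no_root_on_Cpath:
  assumes "s \<in> Dplus (21/4)" "w \<in> path_image Cpath"
  shows "Pcub s w \<noteq> 0"
proof
  assume r: "Pcub s w = 0"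
  have s: "Im s > 0" "cmod s < 21/4" using assms unfolding Dplus_def by auto
  have "Im w \<noteq> 0" by (rule root_nonreal[OF r s(1)])
  moreover have "\<not> Im w > 0"
  proof
    assume "Im w > 0"
    hence "w \<in> V2" using root_up[OF r s(1)] unfolding V2_def by simp
    thus False using Cpath_avoid(1)[OF assms(2)] by simp
  qed
  moreover have "\<not> Im w < 0"
  proof
    assume i: "Im w < 0"
    have "cmod w < 5" by (rule root_norm[OF r s(2)])
    moreover have "Re w > 0 \<or> Re w < -2" by (rule root_down_side[OF r s(1) i])
    ultimately have "w \<in> WC" using i unfolding WC_def by auto
    thus False using Cpath_avoid(2)[OF assms(2)] by simp
  qed
  ultimately show False by linarith
qed

lemma branch_exists:
  assumes "s \<in> Dplus (21/4)"
  shows "\<exists>\<rho>. is_branch s \<rho>"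
proof -
  have cC: "continuous_on {0..1} Cpath" using Cpath_path(1) unfolding path_def .
  have c: "continuous_on {0..1} (\<lambda>t. Pcub s (Cpath t))" unfolding Pcub_def
    by (intro continuous_intros cC) auto
  have nz: "Pcub s (Cpath t) \<noteq> 0" if "t \<in> {0..1}" for t
    using no_root_on_Cpath[OF assms] that unfolding path_image_def by blast
  obtain g where g: "continuous_on {0..1} g" "\<And>t. t \<in> {0..1} \<Longrightarrow> Pcub s (Cpath t) = (g t)^2"
    using continuous_sqrt_on_contractible[OF c convex_imp_contractible[OF convex_real_interval(5)] nz] by blast
  have "is_branch s g" unfolding is_branch_def using g by simp
  thus ?thesis by blast
qed

lemma rho_bound:
  assumes "s \<in> Dplus (21/4)" "is_branch s \<rho>" "t \<in> {0..1}"
  shows "cmod (\<rho> t) \<le> 11"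
proof -
  have s: "cmod s < 21/4" using assms(1) unfolding Dplus_def by auto
  have u: "cmod (Cpath t) \<le> 6" by (rule Cpath_cball[OF assms(3)])
  define u where "u = Cpath t"
  have "cmod (Pcub s u) \<le> cmod (u^3/3) + cmod (u^2) + cmod s" unfolding Pcub_def
    by (rule order_trans[OF norm_triangle_ineq add_right_mono[OF norm_triangle_ineq]])
  also have "\<dots> = (cmod u)^3/3 + (cmod u)^2 + cmod s" by (simp add: norm_power norm_divide)
  also have "\<dots> \<le> 6^3/3 + 6^2 + 21/4" using u s unfolding u_def
    by (intro add_mono divide_right_mono power_mono) auto
  finally have "cmod (Pcub s u) \<le> 11^2" by simp
  moreover have "Pcub s u = (\<rho> t)^2" using assms(2,3) unfolding is_branch_def u_def by simp
  ultimately have "(cmod (\<rho> t))^2 \<le> 11^2" by (simp add: norm_power)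
  thus ?thesis by (rule power2_le_imp_le) simp
qed

lemma J_bound: "\<exists>\<alpha>::real. \<forall>s\<in>Dplus (21/4). \<forall>\<rho>. is_branch s \<rho> \<longrightarrow>
          (\<forall>t\<in>{0..1}. cmod (Jint \<rho> t) \<le> \<alpha>)"
proof -
  obtain M where "dbound Cpath M" using Cpath_dbound by blast
  then obtain K where K: "finite K"
    "\<And>x. x \<in> {0<..<1} - K \<Longrightarrow> \<exists>D. (Cpath has_vector_derivative D) (at x) \<and> norm D \<le> M"
    unfolding dbound_def by blast
  define B where "B = max M 0"
  have vd: "cmod (vector_derivative Cpath (at x within {0..1})) \<le> B" if xK: "x \<in> {0<..<1} - K" for x
  proof -
    obtain D where D: "(Cpath has_vector_derivative D) (at x)" "norm D \<le> M" using K(2)[OF xK] by blast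
    have "at x within {0..1} = at x" using xK by (intro at_within_interior) simp
    hence "vector_derivative Cpath (at x within {0..1}) = D" using D(1) by (simp add: vector_derivative_at)
    thus ?thesis using D(2) unfolding B_def by simp
  qed
  have "cmod (Jint \<rho> t) \<le> 11 * B" if s: "s \<in> Dplus (21/4)" and rb: "is_branch s \<rho>" and t: "t \<in> {0..1}" for s \<rho> t
  proof (cases "(\<lambda>\<tau>. \<rho> \<tau> * vector_derivative Cpath (at \<tau> within {0..1})) integrable_on {0..t}")
    case True
    hence hi: "((\<lambda>\<tau>. \<rho> \<tau> * vector_derivative Cpath (at \<tau> within {0..1})) has_integral Jint \<rho> t) (cbox 0 t)"
      unfolding Jint_def by (simp add: has_integral_integral)
    have "cmod (Jint \<rho> t) \<le> (11 * B) * measure lborel (cbox (0::real) t)"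
    proof (rule has_integral_bound_spike_finite[OF _ _ hi])
      show "0 \<le> 11 * B" unfolding B_def by simp
      show "finite (K \<union> {0, 1})" using K(1) by simp
      fix x assume x: "x \<in> cbox 0 t - (K \<union> {0, 1})"
      hence x01: "x \<in> {0<..<1} - K" "x \<in> {0..1}" using t by auto
      have "cmod (\<rho> x * vector_derivative Cpath (at x within {0..1})) =
            cmod (\<rho> x) * cmod (vector_derivative Cpath (at x within {0..1}))" by (simp add: norm_mult)
      also have "\<dots> \<le> 11 * B" using rho_bound[OF s rb x01(2)] vd[OF x01(1)]
        by (intro mult_mono) (auto simp: B_def)
      finally show "cmod (\<rho> x * vector_derivative Cpath (at x within {0..1})) \<le> 11 * B" .
    qed
    also have "\<dots> \<le> 11 * B * 1" using t unfolding B_def by (intro mult_left_mono) (auto simp: cbox_interval)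
    finally show ?thesis by simp
  next
    case False
    hence "Jint \<rho> t = 0" unfolding Jint_def by (rule not_integrable_integral)
    thus ?thesis unfolding B_def by simp
  qed
  thus ?thesis by blast
qed

theorem corollary1:
  shows "(\<forall>s\<in>Dplus (21/4). r3 s \<in> Dminus 5 \<and> r1 s \<in> Dminus 5 \<and> r2 s \<in> Dplus 5)
    \<and> (\<forall>s\<in>Dplus (21/4). r2 s \<in> inside (path_image C0hat) \<and> r3 s \<in> inside (path_image C0hat)
          \<and> r1 s \<in> outside (path_image C0hat))
    \<and> (\<forall>s\<in>Dplus (21/4). r1 s \<in> inside (path_image Cpath) \<and> r3 s \<in> inside (path_image Cpath)
          \<and> r2 s \<in> outside (path_image Cpath))
    \<and> (\<forall>s\<in>Dplus (21/4). \<exists>\<rho>. is_branch s \<rho>)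
    \<and> (\<exists>\<alpha>::real. \<forall>s\<in>Dplus (21/4). \<forall>\<rho>. is_branch s \<rho> \<longrightarrow>
          (\<forall>t\<in>{0..1}. cmod (Jint \<rho> t) \<le> \<alpha>))"
proof (intro conjI ballI J_bound branch_exists)
  fix s assume s: "s \<in> Dplus (21/4)"
  note p = root_props[OF s]
  show "r3 s \<in> Dminus 5" "r1 s \<in> Dminus 5" "r2 s \<in> Dplus 5"
    using p unfolding Dminus_def Dplus_def by auto
  have a: "\<bar>Re z\<bar> < 6" "\<bar>Im z\<bar> < 6" if "cmod z < 5" for z
    using abs_Re_le_cmod[of z] abs_Im_le_cmod[of z] that by linarith+
  show "r2 s \<in> inside (path_image C0hat)"
    by (rule inside_C0) (use p a[of "r2 s"] in \<open>auto simp: W0_def\<close>)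
  show "r3 s \<in> inside (path_image C0hat)"
    by (rule inside_C0) (use p a[of "r3 s"] in \<open>auto simp: W0_def\<close>)
  show "r1 s \<in> outside (path_image C0hat)"
  proof (rule outside_ray[of _ "-\<i>"])
    fix t :: real assume t: "t \<ge> 0"
    have "r1 s + of_real t * - \<i> \<in> V1" using p a[of "r1 s"] t unfolding V1_def by auto
    thus "r1 s + of_real t * - \<i> \<notin> path_image C0hat" using C0_avoid(2) by blast
  qed simp
  show "r1 s \<in> inside (path_image Cpath)"
    by (rule inside_Cpath) (use p in \<open>auto simp: WC_def\<close>)
  show "r3 s \<in> inside (path_image Cpath)"
    by (rule inside_Cpath) (use p in \<open>auto simp: WC_def\<close>)
  show "r2 s \<in> outside (path_image Cpath)"
  proof (rule outside_ray[of _ "\<i>"])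
    fix t :: real assume t: "t \<ge> 0"
    have sI: "Im s > 0" using s unfolding Dplus_def by auto
    have up: "(Re (r2 s) + 1)^2 < 1 + (Im (r2 s))^2/3" using root_up[OF _ sI] p(1) by blast
    have pm: "(Im (r2 s))^2 \<le> (Im (r2 s) + t)^2" using p(1) t by (intro power_mono) auto
    have "(Re (r2 s) + 1)^2 < 1 + (Im (r2 s) + t)^2/3"
      using up divide_right_mono[OF pm, of 3] by linarith
    hence "r2 s + of_real t * \<i> \<in> V2" using p(1) t unfolding V2_def by simp
    thus "r2 s + of_real t * \<i> \<notin> path_image Cpath" using Cpath_avoid(1) by blast
  qed simp
qed

end
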